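(* Let $G$ be a finitely generated group with a polynomial growth function. For any polynomial $t(n)$, $\mathsf{CF}\not\subseteq \mathfrak{L}(G)^w_{t(n)}$.
   Context: For a group $G$ with identity $e$, a $G$-automaton is a tuple $(Q,\Sigma,G,\delta,q_0,Q_a)$ where $Q$ is a finite set of states, $\Sigma$ a finite input alphabet, $q_0\in Q$ the initial state, $Q_a\subseteq Q$ the accepting states, and $\delta$ assigns to each $(q,\sigma)\in Q\times(\Sigma\cup\{\varepsilon\})$ a finite set of pairs $(q',m)\in Q\times G$. The register holds an element of $G$, initially $e$; using a transition $(q',m)\in\delta(q,\sigma)$ (one step) the automaton reads $\sigma$ (or nothing), moves to $q'$ and replaces the register content $x$ by $xm$. A word is accepted if some computation reads it entirely and ends in an accepting state with register equal to $e$. A $G$-automaton recognizing $\mathtt{L}$ is weakly $t(n)$ time-bounded if every $x\in\mathtt{L}$ with $|x|=n$ has an accepting computation of at most $t(n)$ steps; $\mathfrak{L}(G)^w_{t(n)}$ is the class of languages recognized by such automata. The growth function of $G$ w.r.t. a finite generating set $X$ counts elements representable by words of length at most $n$ over $X\cup X^{-1}$. $\mathsf{CF}$ is the class of context-free languages. *)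

theory Defs
  imports "HOL-Algebra.Generated_Groups" "HOL-Computational_Algebra.Polynomial"
begin

definition ball_words :: "('g, 'b) monoid_scheme \<Rightarrow> 'g set \<Rightarrow> nat \<Rightarrow> 'g set" where
  "ball_words G X n =
     {g. \<exists>ws. length ws \<le> n \<and> set ws \<subseteq> X \<union> (\<lambda>x. inv\<^bsub>G\<^esub> x) ` X
             \<and> g = foldr (\<lambda>a b. a \<otimes>\<^bsub>G\<^esub> b) ws \<one>\<^bsub>G\<^esub>}"

definition growth :: "('g, 'b) monoid_scheme \<Rightarrow> 'g set \<Rightarrow> nat \<Rightarrow> nat" where
  "growth G X n = card (ball_words G X n)"

definition finite_gen_set :: "('g, 'b) monoid_scheme \<Rightarrow> 'g set \<Rightarrow> bool" where
  "finite_gen_set G X \<longleftrightarrow> finite X \<and> X \<subseteq> carrier G \<and> generate G X = carrier G"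

definition polynomial_growth :: "('g, 'b) monoid_scheme \<Rightarrow> 'g set \<Rightarrow> bool" where
  "polynomial_growth G X \<longleftrightarrow> (\<exists>C d::nat. \<forall>n\<ge>1. growth G X n \<le> C * n ^ d)"

text \<open>States are natural numbers; None stands for an epsilon-move.\<close>
record ('a, 'g) gaut =
  states :: "nat set"
  alph   :: "'a set"
  init   :: nat
  acc    :: "nat set"
  delta  :: "nat \<Rightarrow> 'a option \<Rightarrow> (nat \<times> 'g) set"

definition is_gaut :: "('g, 'b) monoid_scheme \<Rightarrow> ('a, 'g) gaut \<Rightarrow> bool" where
  "is_gaut G A \<longleftrightarrow> finite (states A) \<and> finite (alph A) \<and> init A \<in> states A
     \<and> acc A \<subseteq> states A
     \<and> (\<forall>q s. finite (delta A q s) \<and> delta A q s \<subseteq> states A \<times> carrier G)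
     \<and> (\<forall>q s. delta A q s \<noteq> {} \<longrightarrow> q \<in> states A \<and> (\<forall>\<sigma>. s = Some \<sigma> \<longrightarrow> \<sigma> \<in> alph A))"

inductive comp :: "('g, 'b) monoid_scheme \<Rightarrow> ('a, 'g) gaut \<Rightarrow> nat \<Rightarrow> 'g \<Rightarrow> 'a list
                    \<Rightarrow> nat \<Rightarrow> 'g \<Rightarrow> nat \<Rightarrow> bool"
  for G A where
  comp_nil: "comp G A q x [] q x 0"
| comp_eps: "(q1, m) \<in> delta A q None \<Longrightarrow> comp G A q1 (x \<otimes>\<^bsub>G\<^esub> m) w q' y k
              \<Longrightarrow> comp G A q x w q' y (Suc k)"
| comp_sym: "(q1, m) \<in> delta A q (Some \<sigma>) \<Longrightarrow> comp G A q1 (x \<otimes>\<^bsub>G\<^esub> m) w q' y k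
              \<Longrightarrow> comp G A q x (\<sigma> # w) q' y (Suc k)"

definition accepting_comp :: "('g, 'b) monoid_scheme \<Rightarrow> ('a, 'g) gaut \<Rightarrow> 'a list \<Rightarrow> nat \<Rightarrow> bool" where
  "accepting_comp G A w k \<longleftrightarrow>
     (\<exists>q'. q' \<in> acc A \<and> comp G A (init A) \<one>\<^bsub>G\<^esub> w q' \<one>\<^bsub>G\<^esub> k)"

definition gaut_lang :: "('g, 'b) monoid_scheme \<Rightarrow> ('a, 'g) gaut \<Rightarrow> 'a list set" where
  "gaut_lang G A = {w. \<exists>k. accepting_comp G A w k}"

definition weak_time_class :: "('g, 'b) monoid_scheme \<Rightarrow> (nat \<Rightarrow> real) \<Rightarrow> 'a list set set" where
  "weak_time_class G t = {L. \<exists>A::('a, 'g) gaut. is_gaut G A \<and> gaut_lang G A = L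
      \<and> (\<forall>w\<in>L. \<exists>k. real k \<le> t (length w) \<and> accepting_comp G A w k)}"

text \<open>A context-free grammar: finite set of productions with nonterminals (nat, Inl) and
  terminals (Inr); language of start symbol S.\<close>
definition derive1 :: "(nat \<times> (nat + 'a) list) set \<Rightarrow> (nat + 'a) list \<Rightarrow> (nat + 'a) list \<Rightarrow> bool" where
  "derive1 P u v \<longleftrightarrow> (\<exists>\<alpha> \<beta> N \<gamma>. u = \<alpha> @ [Inl N] @ \<beta> \<and> (N, \<gamma>) \<in> P \<and> v = \<alpha> @ \<gamma> @ \<beta>)"

definition cfg_lang :: "(nat \<times> (nat + 'a) list) set \<Rightarrow> nat \<Rightarrow> 'a list set" where
  "cfg_lang P S = {w. (derive1 P)\<^sup>*\<^sup>* [Inl S] (map Inr w)}"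

definition CF :: "'a list set set" where
  "CF = {L. \<exists>P S. finite P \<and> L = cfg_lang P S}"

end

theory Submission
  imports Defs
begin

lemma comp_append:
  assumes "comp G A q x u q1 x1 k1" "comp G A q1 x1 v q' y k2"
  shows "comp G A q x (u @ v) q' y (k1 + k2)"
  using assms by (induction rule: comp.induct) (auto intro: comp.intros)

lemma comp_split:
  assumes "comp G A q x w q' y k"
  shows "w = u @ v \<Longrightarrow> \<exists>q1 x1 k1 k2. comp G A q x u q1 x1 k1 \<and> comp G A q1 x1 v q' y k2 \<and> k = k1 + k2"
  using assms
proof (induction arbitrary: u rule: comp.induct)
  case (comp_nil q x)
  then show ?case by (auto intro: comp.intros)
next
  case (comp_eps q1 m q x w q' y k)
  then obtain q2 x2 k1 k2 where "comp G A q1 (x \<otimes>\<^bsub>G\<^esub> m) u q2 x2 k1" "comp G A q2 x2 v q' y k2" "k = k1 + k2"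
    by blast
  then show ?case using comp_eps(1) by (metis add_Suc comp.comp_eps)
next
  case (comp_sym q1 m q \<sigma> x w q' y k)
  show ?case
  proof (cases u)
    case Nil
    then show ?thesis using comp_sym by (metis add_0 append_Nil comp.comp_nil comp.comp_sym)
  next
    case (Cons a u')
    then have "w = u' @ v" "a = \<sigma>" using comp_sym by auto
    then obtain q2 x2 k1 k2 where "comp G A q1 (x \<otimes>\<^bsub>G\<^esub> m) u' q2 x2 k1" "comp G A q2 x2 v q' y k2" "k = k1 + k2"
      using comp_sym by blast
    then show ?thesis using comp_sym(1) Cons \<open>a = \<sigma>\<close> by (metis add_Suc comp.comp_sym)
  qed
qed

definition Ms :: "('a, 'g) gaut \<Rightarrow> 'g set" where
  "Ms A = {m. \<exists>q s q1. (q1, m) \<in> delta A q s}"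

lemma comp_reg:
  assumes "comp G A q x w q' y k"
  shows "\<exists>ms. length ms = k \<and> set ms \<subseteq> Ms A \<and> y = foldl (\<lambda>a b. a \<otimes>\<^bsub>G\<^esub> b) x ms"
  using assms
proof (induction rule: comp.induct)
  case (comp_nil q x)
  then show ?case by auto
next
  case (comp_eps q1 m q x w q' y k)
  then obtain ms where "length ms = k" "set ms \<subseteq> Ms A" "y = foldl (\<lambda>a b. a \<otimes>\<^bsub>G\<^esub> b) (x \<otimes>\<^bsub>G\<^esub> m) ms" by blast
  then show ?case using comp_eps(1) by (intro exI[of _ "m # ms"]) (auto simp: Ms_def)
next
  case (comp_sym q1 m q \<sigma> x w q' y k)
  then obtain ms where "length ms = k" "set ms \<subseteq> Ms A" "y = foldl (\<lambda>a b. a \<otimes>\<^bsub>G\<^esub> b) (x \<otimes>\<^bsub>G\<^esub> m) ms" by blast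
  then show ?case using comp_sym(1) by (intro exI[of _ "m # ms"]) (auto simp: Ms_def)
qed

lemma comp_states:
  assumes "comp G A q x w q' y k" "is_gaut G A" "q \<in> states A"
  shows "q' \<in> states A"
  using assms by (induction rule: comp.induct) (auto simp: is_gaut_def)

lemma Ms_props:
  assumes "is_gaut G A"
  shows "finite (Ms A)" "Ms A \<subseteq> carrier G"
proof -
  let ?S = "\<Union>q\<in>states A. \<Union>s\<in>insert None (Some ` alph A). snd ` delta A q s"
  have "Ms A \<subseteq> ?S"
  proof
    fix m assume "m \<in> Ms A"
    then obtain q s q1 where h: "(q1, m) \<in> delta A q s" by (auto simp: Ms_def)
    then have "q \<in> states A" "\<forall>\<sigma>. s = Some \<sigma> \<longrightarrow> \<sigma> \<in> alph A"
      using assms unfolding is_gaut_def by blast+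
    moreover have "s \<in> insert None (Some ` alph A)"
      using calculation(2) by (cases s) auto
    ultimately show "m \<in> ?S" using h by force
  qed
  moreover have "finite ?S" using assms unfolding is_gaut_def by auto
  ultimately show "finite (Ms A)" by (rule finite_subset)
  show "Ms A \<subseteq> carrier G" using assms unfolding is_gaut_def Ms_def by fastforce
qed

context group begin

lemma foldr_carrier: "set ws \<subseteq> carrier G \<Longrightarrow> foldr (\<lambda>a b. a \<otimes> b) ws \<one> \<in> carrier G"
  by (induction ws) auto

lemma foldr_app:
  "set ws1 \<subseteq> carrier G \<Longrightarrow> set ws2 \<subseteq> carrier G \<Longrightarrow>
   foldr (\<lambda>a b. a \<otimes> b) (ws1 @ ws2) \<one> = foldr (\<lambda>a b. a \<otimes> b) ws1 \<one> \<otimes> foldr (\<lambda>a b. a \<otimes> b) ws2 \<one>"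
  by (induction ws1) (auto simp: m_assoc foldr_carrier)

lemma generate_words:
  assumes "X \<subseteq> carrier G" "g \<in> generate G X"
  shows "\<exists>ws. set ws \<subseteq> X \<union> (\<lambda>x. inv x) ` X \<and> g = foldr (\<lambda>a b. a \<otimes> b) ws \<one>"
  using assms(2)
proof (induction rule: generate.induct)
  case one
  then show ?case by (intro exI[of _ "[]"]) auto
next
  case (incl h)
  then show ?case using assms(1) by (intro exI[of _ "[h]"]) auto
next
  case (inv h)
  then show ?case using assms(1) by (intro exI[of _ "[inv h]"]) auto
next
  case (eng h1 h2)
  then obtain ws1 ws2 where "set ws1 \<subseteq> X \<union> (\<lambda>x. inv x) ` X" "h1 = foldr (\<lambda>a b. a \<otimes> b) ws1 \<one>"
    "set ws2 \<subseteq> X \<union> (\<lambda>x. inv x) ` X" "h2 = foldr (\<lambda>a b. a \<otimes> b) ws2 \<one>" by blast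
  moreover have "X \<union> (\<lambda>x. inv x) ` X \<subseteq> carrier G" using assms(1) by auto
  ultimately have "h1 \<otimes> h2 = foldr (\<lambda>a b. a \<otimes> b) (ws1 @ ws2) \<one>"
    using foldr_app[of ws1 ws2] by (metis subset_trans)
  with \<open>set ws1 \<subseteq> _\<close> \<open>set ws2 \<subseteq> _\<close> show ?case by (intro exI[of _ "ws1 @ ws2"]) auto
qed

lemma ball_mono: "n \<le> m \<Longrightarrow> ball_words G X n \<subseteq> ball_words G X m"
  unfolding ball_words_def using le_trans by blast

lemma ball_one: "\<one> \<in> ball_words G X n"
  unfolding ball_words_def by (auto intro!: exI[of _ "[]"])

lemma ball_mult:
  assumes "X \<subseteq> carrier G" "a \<in> ball_words G X n" "b \<in> ball_words G X m"
  shows "a \<otimes> b \<in> ball_words G X (n + m)"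
proof -
  have c: "X \<union> (\<lambda>x. inv x) ` X \<subseteq> carrier G" using assms(1) by auto
  obtain ws1 ws2 where "length ws1 \<le> n" "set ws1 \<subseteq> X \<union> (\<lambda>x. inv x) ` X" "a = foldr (\<lambda>a b. a \<otimes> b) ws1 \<one>"
    "length ws2 \<le> m" "set ws2 \<subseteq> X \<union> (\<lambda>x. inv x) ` X" "b = foldr (\<lambda>a b. a \<otimes> b) ws2 \<one>"
    using assms(2,3) unfolding ball_words_def by blast
  moreover have "a \<otimes> b = foldr (\<lambda>a b. a \<otimes> b) (ws1 @ ws2) \<one>"
    using foldr_app[of ws1 ws2] calculation c by (metis subset_trans)
  ultimately show ?thesis unfolding ball_words_def
    by (intro CollectI exI[of _ "ws1 @ ws2"]) auto
qed

lemma foldl_ball: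
  assumes "X \<subseteq> carrier G" "\<forall>m\<in>set ms. m \<in> ball_words G X K"
  shows "foldl (\<lambda>a b. a \<otimes> b) \<one> ms \<in> ball_words G X (K * length ms)"
  using assms(2)
proof (induction ms rule: rev_induct)
  case Nil
  then show ?case by (simp add: ball_one)
next
  case (snoc m ms)
  then have "foldl (\<lambda>a b. a \<otimes> b) \<one> ms \<otimes> m \<in> ball_words G X (K * length ms + K)"
    using ball_mult[OF assms(1)] by auto
  then show ?case by (simp add: algebra_simps)
qed

lemma ball_finite:
  assumes "finite X"
  shows "finite (ball_words G X n)"
proof -
  have "ball_words G X n = (\<lambda>ws. foldr (\<lambda>a b. a \<otimes> b) ws \<one>) ` {ws. set ws \<subseteq> X \<union> (\<lambda>x. inv x) ` X \<and> length ws \<le> n}"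
    unfolding ball_words_def by auto
  moreover have "finite {ws. set ws \<subseteq> X \<union> (\<lambda>x. inv x) ` X \<and> length ws \<le> n}"
    using assms by (intro finite_lists_length_le) auto
  ultimately show ?thesis by simp
qed

end


lemma poly_bound: "\<exists>B::nat. \<forall>x::nat. poly p (real x) \<le> real B * (real x + 1) ^ degree p"
proof -
  define S where "S = (\<Sum>i\<le>degree p. \<bar>coeff p i\<bar>)"
  have "poly p (real x) \<le> real (nat \<lceil>S\<rceil>) * (real x + 1) ^ degree p" for x :: nat
  proof -
    have "poly p (real x) \<le> \<bar>poly p (real x)\<bar>" by simp
    also have "\<dots> \<le> (\<Sum>i\<le>degree p. \<bar>coeff p i * real x ^ i\<bar>)"
      unfolding poly_altdef by (rule sum_abs)
    also have "\<dots> \<le> (\<Sum>i\<le>degree p. \<bar>coeff p i\<bar> * (real x + 1) ^ degree p)"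
    proof (rule sum_mono)
      fix i assume "i \<in> {..degree p}"
      then have "real x ^ i \<le> (real x + 1) ^ i" by (intro power_mono) auto
      also have "\<dots> \<le> (real x + 1) ^ degree p" using \<open>i \<in> _\<close> by (intro power_increasing) auto
      finally show "\<bar>coeff p i * real x ^ i\<bar> \<le> \<bar>coeff p i\<bar> * (real x + 1) ^ degree p"
        by (simp add: abs_mult mult_left_mono)
    qed
    also have "\<dots> = S * (real x + 1) ^ degree p" by (simp add: S_def sum_distrib_right)
    also have "\<dots> \<le> real (nat \<lceil>S\<rceil>) * (real x + 1) ^ degree p"
      by (intro mult_right_mono) (auto, linarith)
    finally show ?thesis .
  qed
  then show ?thesis by blast
qed

lemma exp_beats_poly: "\<exists>n::nat. real c * (real n + 1) ^ e < 2 ^ n"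
proof -
  define L :: real where "L = ln 2"
  have L: "L > 0" unfolding L_def by simp
  have "filterlim (\<lambda>n. L * real n) at_top sequentially"
    by (rule filterlim_tendsto_pos_mult_at_top[OF tendsto_const L filterlim_real_sequentially])
  then have "((\<lambda>n. (L * real n) ^ e / exp (L * real n)) \<longlongrightarrow> 0) sequentially"
    by (rule filterlim_compose[OF tendsto_power_div_exp_0])
  moreover have "exp (L * real n) = 2 ^ n" for n :: nat
    unfolding L_def by (metis exp_ln mult.commute exp_of_nat_mult zero_less_numeral)
  ultimately have lim: "((\<lambda>n. (L * real n) ^ e / 2 ^ n) \<longlongrightarrow> 0) sequentially" by simp
  define \<epsilon> where "\<epsilon> = L ^ e / (real c * 2 ^ e + 1)"
  have cpos: "real c * 2 ^ e + 1 > 0"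
    by (metis add_nonneg_pos mult_nonneg_nonneg of_nat_0_le_iff zero_le_numeral zero_le_power zero_less_one)
  have "\<epsilon> > 0" unfolding \<epsilon>_def using L cpos by (intro divide_pos_pos) auto
  then have "eventually (\<lambda>n. dist ((L * real n) ^ e / 2 ^ n) 0 < \<epsilon>) sequentially"
    by (rule tendstoD[OF lim])
  then obtain N where N: "\<And>n. n \<ge> N \<Longrightarrow> dist ((L * real n) ^ e / 2 ^ n) 0 < \<epsilon>"
    unfolding eventually_sequentially by blast
  define n where "n = max N 1"
  have n: "(L * real n) ^ e / 2 ^ n < \<epsilon>" "n \<ge> 1"
    using N[of n] unfolding n_def by (auto simp: dist_real_def) (smt (verit) divide_right_mono zero_le_power)
  have "L ^ e * real n ^ e < \<epsilon> * 2 ^ n" using n(1) by (simp add: power_mult_distrib divide_less_eq)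
  then have "L ^ e * real n ^ e * (real c * 2 ^ e + 1) < L ^ e * 2 ^ n"
    unfolding \<epsilon>_def by (simp add: field_simps add_pos_nonneg)
  then have "real n ^ e * (real c * 2 ^ e + 1) < 2 ^ n"
    using L by (simp add: mult.assoc)
  then have 1: "real c * (2 * real n) ^ e < 2 ^ n"
    by (simp add: power_mult_distrib algebra_simps) (smt (verit) zero_le_power of_nat_0_le_iff)
  have "(real n + 1) ^ e \<le> (2 * real n) ^ e" using n(2) by (intro power_mono) auto
  then have "real c * (real n + 1) ^ e \<le> real c * (2 * real n) ^ e" by (intro mult_left_mono) auto
  with 1 have "real c * (real n + 1) ^ e < 2 ^ n" by linarith
  then show ?thesis by blast
qed

definition palL :: "nat list set" where
  "palL = {u @ [2] @ rev u | u. set u \<subseteq> {0, 1}}"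

definition palP :: "(nat \<times> (nat + nat) list) set" where
  "palP = {(0, [Inr 0, Inl 0, Inr 0]), (0, [Inr 1, Inl 0, Inr 1]), (0, [Inr 2])}"

lemma pal_mid: "set u \<subseteq> {0, 1} \<Longrightarrow> (derive1 palP)\<^sup>*\<^sup>* [Inl 0] (map Inr u @ [Inl 0] @ map Inr (rev u))"
proof (induction u rule: rev_induct)
  case Nil
  then show ?case by simp
next
  case (snoc a u)
  then have IH: "(derive1 palP)\<^sup>*\<^sup>* [Inl 0] (map Inr u @ [Inl 0] @ map Inr (rev u))" by auto
  have "(0, [Inr a, Inl 0, Inr a]) \<in> palP" using snoc.prems by (auto simp: palP_def)
  then have "derive1 palP (map Inr u @ [Inl 0] @ map Inr (rev u)) (map Inr u @ [Inr a, Inl 0, Inr a] @ map Inr (rev u))"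
    unfolding derive1_def by blast
  with IH show ?case by simp
qed

lemma pal_inv:
  assumes "(derive1 palP)\<^sup>*\<^sup>* [Inl 0] v"
  shows "\<exists>u. set u \<subseteq> {0, 1} \<and> (v = map Inr u @ [Inl 0] @ map Inr (rev u) \<or> v = map Inr (u @ [2] @ rev u))"
  using assms
proof (induction rule: rtranclp_induct)
  case base
  then show ?case by (intro exI[of _ "[]"]) auto
next
  case (step v v')
  then obtain u where u: "set u \<subseteq> {0, 1}"
    "v = map Inr u @ [Inl 0] @ map Inr (rev u) \<or> v = map Inr (u @ [2] @ rev u)" by blast
  from step(2) obtain \<alpha> \<beta> N \<gamma> where d: "v = \<alpha> @ [Inl N] @ \<beta>" "(N, \<gamma>) \<in> palP" "v' = \<alpha> @ \<gamma> @ \<beta>"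
    unfolding derive1_def by blast
  have N: "N = 0" using d(2) by (auto simp: palP_def)
  have "Inl N \<in> set v" using d(1) by simp
  then have v: "v = map Inr u @ [Inl 0] @ map Inr (rev u)" using u(2) by auto
  have "map Inr u @ Inl 0 # map Inr (rev u) = \<alpha> @ Inl 0 # \<beta>" using v d(1) N by simp
  moreover have "Inl 0 \<notin> set (map Inr u)" "Inl 0 \<notin> set (map Inr (rev u))" by auto
  ultimately have ab: "\<alpha> = map Inr u" "\<beta> = map Inr (rev u)"
    using append_Cons_eq_iff[of "Inl 0" "map Inr u" "map Inr (rev u)" \<alpha> \<beta>] by blast+
  from d(2) consider "\<gamma> = [Inr 0, Inl 0, Inr 0]" | "\<gamma> = [Inr 1, Inl 0, Inr 1]" | "\<gamma> = [Inr 2]"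
    by (auto simp: palP_def)
  then show ?case
  proof cases
    case 1
    then show ?thesis using u(1) d(3) ab by (intro exI[of _ "u @ [0]"]) auto
  next
    case 2
    then show ?thesis using u(1) d(3) ab by (intro exI[of _ "u @ [1]"]) auto
  next
    case 3
    then show ?thesis using u(1) d(3) ab by (intro exI[of _ u]) auto
  qed
qed

lemma pal_lang: "cfg_lang palP 0 = palL"
proof
  show "cfg_lang palP 0 \<subseteq> palL"
  proof
    fix w assume "w \<in> cfg_lang palP 0"
    then have "(derive1 palP)\<^sup>*\<^sup>* [Inl 0] (map Inr w)" by (simp add: cfg_lang_def)
    from pal_inv[OF this] obtain u where u: "set u \<subseteq> {0, 1}"
      "(map Inr w :: (nat + nat) list) = map Inr u @ [Inl 0] @ map Inr (rev u) \<or> (map Inr w :: (nat + nat) list) = map Inr (u @ [2] @ rev u)" by blast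
    have "Inl 0 \<notin> set (map Inr w :: (nat + nat) list)" by auto
    moreover have "Inl 0 \<in> set (map Inr u @ [Inl 0] @ map Inr (rev u) :: (nat + nat) list)" by simp
    ultimately have "map Inr w \<noteq> (map Inr u @ [Inl 0] @ map Inr (rev u) :: (nat + nat) list)"
      by force
    with u(2) have "map Inr w = (map Inr (u @ [2] @ rev u) :: (nat + nat) list)"
      by blast
    then have "w = u @ [2] @ rev u" using inj_map_eq_map[OF inj_Inr] by blast
    then show "w \<in> palL" using u(1) by (auto simp: palL_def)
  qed
  show "palL \<subseteq> cfg_lang palP 0"
  proof
    fix w assume "w \<in> palL"
    then obtain u where u: "set u \<subseteq> {0, 1}" "w = u @ [2] @ rev u" by (auto simp: palL_def)
    have "derive1 palP (map Inr u @ [Inl 0] @ map Inr (rev u)) (map Inr u @ [Inr 2] @ map Inr (rev u))"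
      unfolding derive1_def palP_def
      by (rule exI[of _ "map Inr u"], rule exI[of _ "map Inr (rev u)"], rule exI[of _ 0], rule exI[of _ "[Inr 2]"]) simp
    with pal_mid[OF u(1)] have "(derive1 palP)\<^sup>*\<^sup>* [Inl 0] (map Inr u @ [Inr 2] @ map Inr (rev u))"
      by (rule rtranclp.rtrancl_into_rtrancl)
    moreover have "map Inr u @ [Inr 2] @ map Inr (rev u) = (map Inr w :: (nat + nat) list)" using u(2) by simp
    ultimately show "w \<in> cfg_lang palP 0" unfolding cfg_lang_def by simp
  qed
qed

lemma pal_CF: "palL \<in> CF"
proof -
  have "finite palP" by (simp add: palP_def)
  then show ?thesis unfolding CF_def using pal_lang[symmetric] by (intro CollectI exI[of _ palP] exI[of _ 0]) simp
qed


lemma finite_bound_ball: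
  assumes "finite M" "\<forall>m\<in>M. \<exists>k. m \<in> ball_words G X k"
  shows "\<exists>K. \<forall>m\<in>M. m \<in> ball_words G X K"
proof -
  from assms(2) obtain f where f: "\<forall>m\<in>M. m \<in> ball_words G X (f m)" by metis
  have "\<forall>m\<in>M. m \<in> ball_words G X (\<Sum>m\<in>M. f m)"
  proof
    fix m assume "m \<in> M"
    then have "f m \<le> (\<Sum>m\<in>M. f m)" using assms(1) by (intro member_le_sum) auto
    then show "m \<in> ball_words G X (\<Sum>m\<in>M. f m)"
      using f \<open>m \<in> M\<close> unfolding ball_words_def using le_trans by blast
  qed
  then show ?thesis by blast
qed

theorem theorem4p5:
  fixes G :: "('g, 'b) monoid_scheme" and p :: "real poly"
  assumes "group G"
    and "\<exists>X. finite_gen_set G X \<and> polynomial_growth G X"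
  shows "\<not> ((CF :: nat list set set) \<subseteq> weak_time_class G (\<lambda>n. poly p (real n)))"
proof
  assume sub: "(CF :: nat list set set) \<subseteq> weak_time_class G (\<lambda>n. poly p (real n))"
  interpret group G by (rule assms(1))
  obtain X where X: "finite_gen_set G X" "polynomial_growth G X" using assms(2) by blast
  obtain C d where Cd: "\<forall>n\<ge>1. growth G X n \<le> C * n ^ d"
    using X(2) unfolding polynomial_growth_def by blast
  have Xc: "X \<subseteq> carrier G" "finite X" "generate G X = carrier G"
    using X(1) unfolding finite_gen_set_def by auto
  have "palL \<in> weak_time_class G (\<lambda>n. poly p (real n))" using sub pal_CF by blast
  then obtain A :: "(nat, 'g) gaut" where A: "is_gaut G A" "gaut_lang G A = palL"
    "\<forall>w\<in>palL. \<exists>k. real k \<le> poly p (real (length w)) \<and> accepting_comp G A w k"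
    unfolding weak_time_class_def by blast
  have "\<forall>m\<in>Ms A. \<exists>k. m \<in> ball_words G X k"
  proof
    fix m assume "m \<in> Ms A"
    then have "m \<in> generate G X" using Ms_props(2)[OF A(1)] Xc(3) by auto
    from generate_words[OF Xc(1) this] obtain ws where
      "set ws \<subseteq> X \<union> (\<lambda>x. inv\<^bsub>G\<^esub> x) ` X" "m = foldr (\<lambda>a b. a \<otimes>\<^bsub>G\<^esub> b) ws \<one>\<^bsub>G\<^esub>" by blast
    then have "m \<in> ball_words G X (length ws)" unfolding ball_words_def by auto
    then show "\<exists>k. m \<in> ball_words G X k" by blast
  qed
  from finite_bound_ball[OF Ms_props(1)[OF A(1)] this] obtain K where K: "\<forall>m\<in>Ms A. m \<in> ball_words G X K"
    by blast
  obtain B where B: "\<forall>x::nat. poly p (real x) \<le> real B * (real x + 1) ^ degree p"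
    using poly_bound by blast
  define D where "D = degree p"
  define S where "S = card (states A)"
  define c where "c = S * C * (K * B + 1) ^ d * 2 ^ (D * d)"
  define e where "e = D * d"
  obtain n where n: "real c * (real n + 1) ^ e < 2 ^ n" using exp_beats_poly by blast
  define R where "R = (K * B + 1) * (2 * n + 2) ^ D"
  define U where "U = {u :: nat list. set u \<subseteq> {0, 1} \<and> length u = n}"
  define P where "P = (\<lambda>u (q1, x1). q1 \<in> states A \<and> x1 \<in> ball_words G X R
      \<and> (\<exists>k1. comp G A (init A) \<one>\<^bsub>G\<^esub> (u @ [2]) q1 x1 k1)
      \<and> (\<exists>qf k2. qf \<in> acc A \<and> comp G A q1 x1 (rev u) qf \<one>\<^bsub>G\<^esub> k2))"
  have ex: "\<exists>cf. P u cf" if u: "u \<in> U" for u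
  proof -
    have w: "u @ [2] @ rev u \<in> palL" using u unfolding U_def palL_def by blast
    have len: "length (u @ [2] @ rev u) = 2 * n + 1" using u unfolding U_def by simp
    obtain k where k: "real k \<le> poly p (real (2 * n + 1))" "accepting_comp G A (u @ [2] @ rev u) k"
      using A(3) w len by metis
    have "real k \<le> real B * (real (2 * n + 1) + 1) ^ D" using k(1) B D_def by (metis order_trans)
    also have "\<dots> = real (B * (2 * n + 2) ^ D)" by simp
    finally have kB: "k \<le> B * (2 * n + 2) ^ D" by linarith
    from k(2) obtain qf where qf: "qf \<in> acc A" "comp G A (init A) \<one>\<^bsub>G\<^esub> ((u @ [2]) @ rev u) qf \<one>\<^bsub>G\<^esub> k"
      unfolding accepting_comp_def by auto
    from comp_split[OF qf(2)] obtain q1 x1 k1 k2 where sp: "comp G A (init A) \<one>\<^bsub>G\<^esub> (u @ [2]) q1 x1 k1"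
      "comp G A q1 x1 (rev u) qf \<one>\<^bsub>G\<^esub> k2" "k = k1 + k2" by blast
    from comp_reg[OF sp(1)] obtain ms where ms: "length ms = k1" "set ms \<subseteq> Ms A"
      "x1 = foldl (\<lambda>a b. a \<otimes>\<^bsub>G\<^esub> b) \<one>\<^bsub>G\<^esub> ms" by blast
    have "x1 \<in> ball_words G X (K * k1)" using foldl_ball[OF Xc(1), of ms K] ms K by auto
    moreover have "K * k1 \<le> R"
    proof -
      have "K * k1 \<le> K * (B * (2 * n + 2) ^ D)" using kB sp(3) by simp
      also have "\<dots> \<le> R" unfolding R_def by (simp add: algebra_simps)
      finally show ?thesis .
    qed
    ultimately have "x1 \<in> ball_words G X R" using ball_mono by blast
    moreover have "q1 \<in> states A"
      using comp_states[OF sp(1) A(1)] A(1) unfolding is_gaut_def by blast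
    ultimately have "P u (q1, x1)" unfolding P_def using sp qf(1) by blast
    then show ?thesis by blast
  qed
  define f where "f = (\<lambda>u. SOME cf. P u cf)"
  have Pf: "P u (f u)" if "u \<in> U" for u unfolding f_def using someI_ex[OF ex[OF that]] .
  have inj: "inj_on f U"
  proof (rule inj_onI)
    fix u v assume uv: "u \<in> U" "v \<in> U" "f u = f v"
    obtain q1 x1 where fu: "f u = (q1, x1)" by fastforce
    from Pf[OF uv(1)] fu obtain k1 where c1: "comp G A (init A) \<one>\<^bsub>G\<^esub> (u @ [2]) q1 x1 k1"
      unfolding P_def by auto
    from Pf[OF uv(2)] fu uv(3) obtain qf k2 where c2: "qf \<in> acc A" "comp G A q1 x1 (rev v) qf \<one>\<^bsub>G\<^esub> k2"
      unfolding P_def by auto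
    have "accepting_comp G A ((u @ [2]) @ rev v) (k1 + k2)"
      unfolding accepting_comp_def using comp_append[OF c1 c2(2)] c2(1) by blast
    then have "u @ [2] @ rev v \<in> palL" using A(2) unfolding gaut_lang_def by auto
    then obtain u' where u': "set u' \<subseteq> {0, 1}" "u @ [2] @ rev v = u' @ [2] @ rev u'"
      unfolding palL_def by blast
    have "(2::nat) \<notin> set u" "(2::nat) \<notin> set (rev v)" using uv(1,2) unfolding U_def by auto
    then have "u = u' \<and> rev v = rev u'" using u'(2) append_Cons_eq_iff[of 2 u "rev v" u' "rev u'"] by simp
    then show "u = v" by simp
  qed
  have img: "f ` U \<subseteq> states A \<times> ball_words G X R"
  proof
    fix cf assume "cf \<in> f ` U"
    then obtain u where "u \<in> U" "cf = f u" by blast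
    then show "cf \<in> states A \<times> ball_words G X R" using Pf[of u] unfolding P_def by (cases cf) auto
  qed
  have finS: "finite (states A)" using A(1) unfolding is_gaut_def by blast
  have finB: "finite (ball_words G X R)" using ball_finite[OF Xc(2)] .
  have "card U = 2 ^ n"
  proof -
    have "card U = card {0, 1::nat} ^ n" unfolding U_def using card_lists_length_eq[of "{0, 1::nat}" n] by simp
    then show ?thesis by (simp add: numeral_2_eq_2)
  qed
  moreover have "card U \<le> card (states A \<times> ball_words G X R)"
    using card_inj_on_le[OF inj img] finS finB by simp
  moreover have "card (states A \<times> ball_words G X R) = S * growth G X R"
    unfolding S_def growth_def by (simp add: card_cartesian_product)
  moreover have "growth G X R \<le> C * R ^ d"
  proof -
    have a: "1 \<le> (2 * n + 2 :: nat) ^ D" by (rule one_le_power) simp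
    have "1 * (2 * n + 2) ^ D \<le> (K * B + 1) * (2 * n + 2) ^ D" by (rule mult_le_mono1) simp
    then have "R \<ge> 1" unfolding R_def using a by linarith
    then show ?thesis using Cd by blast
  qed
  ultimately have "2 ^ n \<le> S * (C * R ^ d)" by (metis le_trans mult_le_mono2)
  also have "S * (C * R ^ d) = c * (n + 1) ^ e"
  proof -
    have "(2 * n + 2) ^ D = 2 ^ D * (n + 1) ^ D" by (simp add: power_mult_distrib[symmetric])
    then have "R = (K * B + 1) * 2 ^ D * (n + 1) ^ D"
      unfolding R_def by (metis mult.assoc)
    then have "R ^ d = (K * B + 1) ^ d * 2 ^ (D * d) * (n + 1) ^ (D * d)"
      by (simp only: power_mult_distrib power_mult)
    then show ?thesis unfolding c_def e_def by (simp add: algebra_simps)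
  qed
  finally have "real (2 ^ n) \<le> real (c * (n + 1) ^ e)" by (simp only: of_nat_le_iff)
  then show False using n by (simp add: add.commute)
qed

end
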